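(* Let $q=p_1\otimes\cdots\otimes p_k\in B_{\lambda_1}\otimes\cdots\otimes B_{\lambda_k}$ and $1\le i\le n+1$. Let $l\ge\lambda_1+\cdots+\lambda_k$ be large enough that $T_l(q)=T_\infty(q)$, put $v_0=u_l$ and define $v_j$ recursively by $v_{j-1}\otimes p_j\simeq p'_j\otimes v_j$. Then $$\rho_i(q)-\rho_i(T_\infty(q))=\sum_{j=1}^k Q_i(v_{j-1}\otimes p_j).$$
   Context: Fix $n\ge1$. For $l\ge1$ let $B_l=\{x=(x_1,\dots,x_{n+1})\in\mathbb Z_{\ge0}^{n+1}: \sum_i x_i=l\}$ and $u_l=(l,0,\dots,0)\in B_l$. Indices of $x$ are read modulo $n+1$. For $x\in B_l,y\in B_m$ and $i\in\mathbb Z$ put $Q_i(x\otimes y)=\min_{1\le k\le n+1}\big(\sum_{j=1}^{k-1}x_{i+j}+\sum_{j=k+1}^{n+1}y_{i+j}\big)$ (so $Q_{n+1}=Q_0$) and $H(x\otimes y)=\min(l,m)-Q_0(x\otimes y)$. The combinatorial $R$ is the map $B_l\otimes B_m\to B_m\otimes B_l$, $x\otimes y\mapsto\tilde y\otimes\tilde x$, $\tilde x_i=x_i+Q_i-Q_{i-1}$, $\tilde y_i=y_i+Q_{i-1}-Q_i$ ($Q_j=Q_j(x\otimes y)$); write $x\otimes y\simeq\tilde y\otimes\tilde x$, and extend $\simeq$ to tensor products by applying $R$ to adjacent factors. Box-ball system: a state is $p=p_1\otimes\cdots\otimes p_L\in B_{\lambda_1}\otimes\cdots\otimes B_{\lambda_L}$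 ($\lambda_j\ge1$). For $l\ge1$ let $v_0=u_l$ and recursively $v_{j-1}\otimes p_j\simeq p'_j\otimes v_j$ ($1\le j\le L$); then $T_l(p)=p'_1\otimes\cdots\otimes p'_L$. For all sufficiently large $l$, $T_l(p)$ is independent of $l$; this is $T_\infty(p)$. Writing $T_\infty^t(p)=p^t_1\otimes\cdots\otimes p^t_L$, $p^t_j=(x^t_{j,1},\dots,x^t_{j,n+1})$, define for $0\le k\le L$, $1\le d\le n+1$: $\rho_{k,d}(p)=\sum_{j=1}^k(x^0_{j,2}+\cdots+x^0_{j,d})+\sum_{t\ge1}\sum_{j=1}^k(x^t_{j,2}+\cdots+x^t_{j,n+1})$ (a finite sum), and $\rho_{k,0}(p)=\rho_{k,n+1}(p)-(\lambda_1+\cdots+\lambda_k)$. For a state $q$ of length $k$ write $\rho_d(q)=\rho_{k,d}(q)$. *)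

theory Defs
  imports Main
begin

text \<open>An element x of B_l (for fixed n) is a list of naturals of length n+1 with sum l.
  ent n x i is the component x_i, the index i being read modulo n+1 (1-based).\<close>

definition inB :: "nat \<Rightarrow> nat \<Rightarrow> nat list \<Rightarrow> bool" where
  "inB n l x \<longleftrightarrow> length x = n + 1 \<and> sum_list x = l"

definition ent :: "nat \<Rightarrow> nat list \<Rightarrow> int \<Rightarrow> int" where
  "ent n x i = int (x ! nat ((i - 1) mod int (n + 1)))"

definition uvec :: "nat \<Rightarrow> nat \<Rightarrow> nat list" where
  "uvec n l = l # replicate n 0"

definition Qf :: "nat \<Rightarrow> int \<Rightarrow> nat list \<Rightarrow> nat list \<Rightarrow> int" where
  "Qf n i x y = Min ((\<lambda>k. (\<Sum>j\<in>{1..k-1}. ent n x (i + j)) + (\<Sum>j\<in>{k+1..int n + 1}. ent n y (i + j)))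
                       ` {1..int n + 1})"

text \<open>Combinatorial R: x \<otimes> y \<mapsto> ytilde \<otimes> xtilde, returned as the pair (ytilde, xtilde).\<close>
definition Rmap :: "nat \<Rightarrow> nat list \<Rightarrow> nat list \<Rightarrow> nat list \<times> nat list" where
  "Rmap n x y =
    (map (\<lambda>m. nat (ent n y (int m) + Qf n (int m - 1) x y - Qf n (int m) x y)) [1..<n+2],
     map (\<lambda>m. nat (ent n x (int m) + Qf n (int m) x y - Qf n (int m - 1) x y)) [1..<n+2])"

text \<open>Carrier sweep: given v_0 and p_1..p_L, returns (p'_1..p'_L, [v_0, v_1, ..., v_L]),
  where v_{j-1} \<otimes> p_j \<simeq> p'_j \<otimes> v_j.\<close>
fun sweep :: "nat \<Rightarrow> nat list \<Rightarrow> nat list list \<Rightarrow> nat list list \<times> nat list list" where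
  "sweep n v [] = ([], [v])"
| "sweep n v (p # ps) =
     (let (p', v') = Rmap n v p; (out, vs) = sweep n v' ps in (p' # out, v # vs))"

definition Tl :: "nat \<Rightarrow> nat \<Rightarrow> nat list list \<Rightarrow> nat list list" where
  "Tl n l p = fst (sweep n (uvec n l) p)"

definition carriers :: "nat \<Rightarrow> nat \<Rightarrow> nat list list \<Rightarrow> nat list list" where
  "carriers n l p = snd (sweep n (uvec n l) p)"

definition Tinf :: "nat \<Rightarrow> nat list list \<Rightarrow> nat list list" where
  "Tinf n p = (SOME r. \<exists>L. \<forall>l\<ge>L. Tl n l p = r)"

text \<open>rho_{k,d}(p) for 1 \<le> d \<le> n+1; the sum over t \<ge> 1 is taken over the (finite) set of t
  with nonzero summand.\<close>
definition rho :: "nat \<Rightarrow> nat \<Rightarrow> nat \<Rightarrow> nat list list \<Rightarrow> int" where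
  "rho n k d p =
     (let g = (\<lambda>t. \<Sum>j\<in>{1..k}. \<Sum>c\<in>{2..n+1}. ent n (((Tinf n ^^ t) p) ! (j - 1)) (int c))
      in (\<Sum>j\<in>{1..k}. \<Sum>c\<in>{2..d}. ent n (p ! (j - 1)) (int c))
         + (\<Sum>t\<in>{t. t \<ge> 1 \<and> g t \<noteq> 0}. g t))"

definition rho0 :: "nat \<Rightarrow> nat \<Rightarrow> nat list list \<Rightarrow> int" where
  "rho0 n k p = rho n k (n + 1) p - (\<Sum>j\<in>{1..k}. int (sum_list (p ! (j - 1))))"

definition rhoS :: "nat \<Rightarrow> nat \<Rightarrow> nat list list \<Rightarrow> int" where
  "rhoS n d q = rho n (length q) d q"

end

theory Submission
  imports Defs
begin


definition Tt :: "nat \<Rightarrow> int \<Rightarrow> nat list \<Rightarrow> nat list \<Rightarrow> int \<Rightarrow> int" where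
 "Tt n i x y k = (\<Sum>j\<in>{1..k-1}. ent n x (i + j)) + (\<Sum>j\<in>{k+1..int n + 1}. ent n y (i + j))"

lemma Qf_Tt: "Qf n i x y = Min (Tt n i x y ` {1..int n + 1})"
  unfolding Qf_def Tt_def by simp

lemma Qf_le: "1 \<le> k \<Longrightarrow> k \<le> int n + 1 \<Longrightarrow> Qf n i x y \<le> Tt n i x y k"
  unfolding Qf_Tt by (rule Min_le) auto

lemma Qf_attained: "\<exists>k. 1 \<le> k \<and> k \<le> int n + 1 \<and> Qf n i x y = Tt n i x y k"
proof -
  have "Qf n i x y \<in> Tt n i x y ` {1..int n + 1}"
    unfolding Qf_Tt by (rule Min_in) auto
  then show ?thesis by auto
qed

lemma Qf_geI: "(\<And>k. 1 \<le> k \<Longrightarrow> k \<le> int n + 1 \<Longrightarrow> b \<le> Tt n i x y k) \<Longrightarrow> b \<le> Qf n i x y"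
  unfolding Qf_Tt by (rule Min.boundedI) auto

lemma ent_def': "ent n x i = int (x ! nat ((i - 1) mod (int n + 1)))"
  unfolding ent_def by (simp only: of_nat_add of_nat_1)

lemma ent_nonneg: "0 \<le> ent n x i"
  by (simp add: ent_def')

lemma Tt_nonneg: "0 \<le> Tt n i x y k"
  unfolding Tt_def by (intro add_nonneg_nonneg sum_nonneg) (auto simp: ent_nonneg)

lemma Qf_nonneg: "0 \<le> Qf n i x y"
  by (rule Qf_geI) (rule Tt_nonneg)

lemma ent_shift: "ent n x (a + (int n + 1)) = ent n x a"
proof -
  have "(a + (int n + 1) - 1) mod (int n + 1) = ((a - 1) + (int n + 1)) mod (int n + 1)"
    by (rule arg_cong[where f="\<lambda>t. t mod (int n + 1)"]) simp
  also have "\<dots> = (a - 1) mod (int n + 1)" by (rule mod_add_self2)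
  finally show ?thesis unfolding ent_def' by simp
qed

lemma ent_shift': "ent n x (a - (int n + 1)) = ent n x a"
  using ent_shift[of n x "a - (int n + 1)"] by simp

lemma ent_mod: "ent n x i = ent n x ((i - 1) mod (int n + 1) + 1)"
proof -
  have "((i - 1) mod (int n + 1) + 1 - 1) mod (int n + 1) = (i - 1) mod (int n + 1) mod (int n + 1)"
    by (rule arg_cong[where f="\<lambda>t. t mod (int n + 1)"]) simp
  also have "\<dots> = (i - 1) mod (int n + 1)" by (rule mod_mod_trivial)
  finally show ?thesis unfolding ent_def' by simp
qed

lemma Qf_period: "Qf n (i + (int n + 1)) x y = Qf n i x y"
proof -
  have "\<And>j. ent n x (i + (int n + 1) + j) = ent n x (i + j)"
       "\<And>j. ent n y (i + (int n + 1) + j) = ent n y (i + j)"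
    using ent_shift[of n _ "i + _"] by (simp_all add: ac_simps)
  then show ?thesis unfolding Qf_def by simp
qed

lemma sum_shift_int: "(\<Sum>j\<in>{a..b}. f (c + j)) = (\<Sum>j\<in>{a+1..b+1}. f (c - 1 + j))" for f :: "int \<Rightarrow> int"
  by (rule sum.reindex_bij_witness[of _ "\<lambda>j. j - 1" "\<lambda>j. j + 1"]) auto

lemma sum_top_int: "a \<le> b + 1 \<Longrightarrow> (\<Sum>j\<in>{a..b+1}. h j) = (\<Sum>j\<in>{a..b}. h j) + h (b + 1)" for h :: "int \<Rightarrow> int"
proof -
  assume "a \<le> b + 1"
  then have "{a..b+1} = insert (b+1) {a..b}" by auto
  then show ?thesis by simp
qed

lemma sum_sub_int: "c \<le> a \<Longrightarrow> (\<And>j. 0 \<le> h j) \<Longrightarrow> (\<Sum>j\<in>{a..b}. h j) \<le> (\<Sum>j\<in>{c..b}. h j)" for h :: "int \<Rightarrow> int"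
  by (rule sum_mono2) auto

lemma period_sum:
  assumes "length y = n + 1"
  shows "(\<Sum>j\<in>{1..int n+1}. ent n y (c + j)) = int (sum_list y)"
proof -
  let ?N = "int n + 1"
  have "(\<Sum>j\<in>{1..int n+1}. ent n y (c + j)) = (\<Sum>m\<in>{..<n+1}. int (y ! m))"
  proof (rule sum.reindex_bij_witness[of _ "\<lambda>m. (int m - c) mod ?N + 1" "\<lambda>j. nat ((c + j - 1) mod ?N)"])
    fix j assume j: "j \<in> {1..int n + 1}"
    show "int (y ! nat ((c + j - 1) mod ?N)) = ent n y (c + j)" unfolding ent_def' by (simp add: ac_simps)
    have b1: "0 \<le> (c + j - 1) mod ?N" "(c + j - 1) mod ?N < ?N"
      by (rule pos_mod_sign, simp) (rule pos_mod_bound, simp)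
    have "(int (nat ((c + j - 1) mod ?N)) - c) mod ?N = ((c + j - 1) mod ?N - c) mod ?N"
      using b1 by simp
    also have "\<dots> = (c + j - 1 - c) mod ?N" by (rule mod_diff_left_eq)
    also have "c + j - 1 - c = j - 1" by simp
    also have "(j - 1) mod ?N = j - 1" by (rule mod_pos_pos_trivial) (use j in auto)
    finally show "(int (nat ((c + j - 1) mod ?N)) - c) mod ?N + 1 = j" by simp
    show "nat ((c + j - 1) mod ?N) \<in> {..<n + 1}"
      using b1 by (simp add: nat_less_iff)
  next
    fix m assume m: "m \<in> {..<n + 1}"
    have b2: "0 \<le> (int m - c) mod ?N" "(int m - c) mod ?N < ?N"
      by (rule pos_mod_sign, simp) (rule pos_mod_bound, simp)
    have "c + ((int m - c) mod ?N + 1) - 1 = c + (int m - c) mod ?N" by simp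
    then have "(c + ((int m - c) mod ?N + 1) - 1) mod ?N = (c + (int m - c)) mod ?N"
      by (simp only: mod_add_right_eq)
    also have "c + (int m - c) = int m" by simp
    also have "int m mod ?N = int m" by (rule mod_pos_pos_trivial) (use m in auto)
    finally show "nat ((c + ((int m - c) mod ?N + 1) - 1) mod ?N) = m" by simp
    show "(int m - c) mod ?N + 1 \<in> {1..int n + 1}"
      using b2 by simp
  qed
  also have "\<dots> = int (sum_list y)"
    using assms by (simp add: sum_list_sum_nth lessThan_atLeast0)
  finally show ?thesis .
qed



lemma Qf_ytilde_nonneg: "Qf n c x y \<le> Qf n (c - 1) x y + ent n y c"
proof -
  let ?N = "int n + 1"
  obtain k where k: "1 \<le> k" "k \<le> ?N" "Qf n (c - 1) x y = Tt n (c - 1) x y k"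
    using Qf_attained by blast
  have Yc: "ent n y (c - 1 + (?N + 1)) = ent n y c"
    using ent_shift[of n y c] by (simp add: ac_simps)
  show ?thesis
  proof (cases "k = 1")
    case True
    have "Tt n c x y 1 = (\<Sum>j\<in>{2..?N}. ent n y (c + j))" by (simp add: Tt_def)
    also have "\<dots> = (\<Sum>j\<in>{3..?N+1}. ent n y (c - 1 + j))"
      using sum_shift_int[of "ent n y" c 2 ?N] by simp
    also have "\<dots> \<le> (\<Sum>j\<in>{2..?N+1}. ent n y (c - 1 + j))"
      by (rule sum_sub_int) (auto simp: ent_nonneg)
    also have "\<dots> = (\<Sum>j\<in>{2..?N}. ent n y (c - 1 + j)) + ent n y (c - 1 + (?N + 1))"
      by (rule sum_top_int) simp
    also have "\<dots> = Tt n (c - 1) x y 1 + ent n y c" using Yc by (simp add: Tt_def)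
    finally have "Tt n c x y 1 \<le> Tt n (c - 1) x y 1 + ent n y c" .
    moreover have "Qf n c x y \<le> Tt n c x y 1" by (rule Qf_le) auto
    ultimately show ?thesis using k True by simp
  next
    case False
    then have k2: "2 \<le> k" using k by simp
    have "(\<Sum>j\<in>{1..k-2}. ent n x (c + j)) = (\<Sum>j\<in>{2..k-1}. ent n x (c - 1 + j))"
      using sum_shift_int[of "ent n x" c 1 "k - 2"] by simp
    also have "\<dots> \<le> (\<Sum>j\<in>{1..k-1}. ent n x (c - 1 + j))"
      by (rule sum_sub_int) (auto simp: ent_nonneg)
    finally have X: "(\<Sum>j\<in>{1..k-2}. ent n x (c + j)) \<le> (\<Sum>j\<in>{1..k-1}. ent n x (c - 1 + j))" .
    have "(\<Sum>j\<in>{k..?N}. ent n y (c + j)) = (\<Sum>j\<in>{k+1..?N+1}. ent n y (c - 1 + j))"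
      using sum_shift_int[of "ent n y" c k ?N] by simp
    also have "\<dots> = (\<Sum>j\<in>{k+1..?N}. ent n y (c - 1 + j)) + ent n y (c - 1 + (?N + 1))"
      by (rule sum_top_int) (use k in simp)
    finally have Y: "(\<Sum>j\<in>{k..?N}. ent n y (c + j)) = (\<Sum>j\<in>{k+1..?N}. ent n y (c - 1 + j)) + ent n y c"
      using Yc by simp
    have "Tt n c x y (k - 1) = (\<Sum>j\<in>{1..k-2}. ent n x (c + j)) + (\<Sum>j\<in>{k..?N}. ent n y (c + j))"
      by (simp add: Tt_def)
    also have "\<dots> \<le> Tt n (c - 1) x y k + ent n y c"
      using X Y by (simp add: Tt_def)
    finally have "Tt n c x y (k - 1) \<le> Tt n (c - 1) x y k + ent n y c" .
    moreover have "Qf n c x y \<le> Tt n c x y (k - 1)" by (rule Qf_le) (use k k2 in auto)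
    ultimately show ?thesis using k by simp
  qed
qed

lemma Qf_shift_x:
  assumes ge: "\<And>i. ent n x i \<le> ent n x' i"
    and big: "\<And>i. ent n x' i \<noteq> ent n x i \<Longrightarrow> (\<Sum>j\<in>{2..int n+1}. ent n y (c + j)) \<le> ent n x i"
  shows "Qf n c x' y = Qf n c x y"
proof (rule antisym)
  show "Qf n c x y \<le> Qf n c x' y"
  proof (rule Qf_geI)
    fix k :: int assume k: "1 \<le> k" "k \<le> int n + 1"
    have "Qf n c x y \<le> Tt n c x y k" by (rule Qf_le) (use k in auto)
    also have "\<dots> \<le> Tt n c x' y k" unfolding Tt_def by (simp add: sum_mono ge)
    finally show "Qf n c x y \<le> Tt n c x' y k" .
  qed
next
  obtain k where k: "1 \<le> k" "k \<le> int n + 1" "Qf n c x y = Tt n c x y k"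
    using Qf_attained by blast
  show "Qf n c x' y \<le> Qf n c x y"
  proof (cases "\<forall>j\<in>{1..k-1}. ent n x' (c + j) = ent n x (c + j)")
    case True
    then have "Tt n c x' y k = Tt n c x y k" unfolding Tt_def by simp
    moreover have "Qf n c x' y \<le> Tt n c x' y k" by (rule Qf_le) (use k in auto)
    ultimately show ?thesis using k by simp
  next
    case False
    then obtain j0 where j0: "j0 \<in> {1..k-1}" "ent n x' (c + j0) \<noteq> ent n x (c + j0)" by blast
    have "Qf n c x' y \<le> Tt n c x' y 1" by (rule Qf_le) auto
    also have "\<dots> = (\<Sum>j\<in>{2..int n+1}. ent n y (c + j))" by (simp add: Tt_def)
    also have "\<dots> \<le> ent n x (c + j0)" using big[OF j0(2)] .
    also have "\<dots> \<le> (\<Sum>j\<in>{1..k-1}. ent n x (c + j))"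
      by (rule member_le_sum[OF j0(1)]) (auto simp: ent_nonneg)
    also have "\<dots> \<le> Tt n c x y k" unfolding Tt_def by (simp add: sum_nonneg ent_nonneg)
    finally show ?thesis using k by simp
  qed
qed

lemma tail_le_sum:
  assumes "length y = n + 1"
  shows "(\<Sum>j\<in>{2..int n+1}. ent n y (c + j)) \<le> int (sum_list y)"
proof -
  have "(\<Sum>j\<in>{2..int n+1}. ent n y (c + j)) \<le> (\<Sum>j\<in>{1..int n+1}. ent n y (c + j))"
    by (rule sum_sub_int) (auto simp: ent_nonneg)
  then show ?thesis using period_sum[OF assms] by simp
qed

lemma Qf_zero:
  assumes "length y = n + 1" and "int (sum_list y) \<le> ent n x 1"
  shows "Qf n 0 x y = (\<Sum>j\<in>{2..int n+1}. ent n y j)"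
proof (rule antisym)
  have "Qf n 0 x y \<le> Tt n 0 x y 1" by (rule Qf_le) auto
  then show "Qf n 0 x y \<le> (\<Sum>j\<in>{2..int n+1}. ent n y j)" by (simp add: Tt_def)
next
  show "(\<Sum>j\<in>{2..int n+1}. ent n y j) \<le> Qf n 0 x y"
  proof (rule Qf_geI)
    fix k :: int assume k: "1 \<le> k" "k \<le> int n + 1"
    show "(\<Sum>j\<in>{2..int n+1}. ent n y j) \<le> Tt n 0 x y k"
    proof (cases "k = 1")
      case True then show ?thesis by (simp add: Tt_def)
    next
      case False
      have "(\<Sum>j\<in>{2..int n+1}. ent n y j) \<le> int (sum_list y)"
        using tail_le_sum[OF assms(1), of 0] by simp
      also have "\<dots> \<le> ent n x (0 + 1)" using assms(2) by simp
      also have "\<dots> \<le> (\<Sum>j\<in>{1..k-1}. ent n x (0 + j))"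
        by (rule member_le_sum) (use k False in \<open>auto simp: ent_nonneg\<close>)
      also have "\<dots> \<le> Tt n 0 x y k" unfolding Tt_def by (simp add: sum_nonneg ent_nonneg)
      finally show ?thesis .
    qed
  qed
qed

lemma ent_map_upt: "ent n (map f [1..<n+2]) i = int (f (Suc (nat ((i - 1) mod (int n + 1)))))"
proof -
  have b: "0 \<le> (i - 1) mod (int n + 1)" "(i - 1) mod (int n + 1) < int n + 1"
    by (rule pos_mod_sign, simp) (rule pos_mod_bound, simp)
  then have "nat ((i - 1) mod (int n + 1)) < n + 1" by (simp add: nat_less_iff)
  then show ?thesis unfolding ent_def' by (simp del: upt_Suc)
qed

lemma nat_mod_c: "1 \<le> c \<Longrightarrow> c \<le> n + 1 \<Longrightarrow> Suc (nat ((int c - 1) mod (int n + 1))) = c"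
proof -
  assume c: "1 \<le> c" "c \<le> n + 1"
  have "(int c - 1) mod (int n + 1) = int c - 1" by (rule mod_pos_pos_trivial) (use c in auto)
  then show ?thesis using c by simp
qed

lemma ent_fstR: "1 \<le> c \<Longrightarrow> c \<le> n + 1 \<Longrightarrow>
   ent n (fst (Rmap n x y)) (int c) = ent n y (int c) + Qf n (int c - 1) x y - Qf n (int c) x y"
proof -
  assume c: "1 \<le> c" "c \<le> n + 1"
  have "ent n (fst (Rmap n x y)) (int c) = int (nat (ent n y (int c) + Qf n (int c - 1) x y - Qf n (int c) x y))"
    unfolding Rmap_def fst_conv ent_map_upt nat_mod_c[OF c] ..
  also have "\<dots> = ent n y (int c) + Qf n (int c - 1) x y - Qf n (int c) x y"
    using Qf_ytilde_nonneg[of n "int c" x y] by simp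
  finally show ?thesis .
qed

lemma ent_sndR: "ent n (snd (Rmap n x y)) i =
   int (nat (ent n x ((i - 1) mod (int n + 1) + 1) + Qf n ((i - 1) mod (int n + 1) + 1) x y
             - Qf n ((i - 1) mod (int n + 1)) x y))"
proof -
  have "0 \<le> (i - 1) mod (int n + 1)" by (rule pos_mod_sign) simp
  then have e: "int (Suc (nat ((i - 1) mod (int n + 1)))) = (i - 1) mod (int n + 1) + 1" by simp
  show ?thesis unfolding Rmap_def snd_conv ent_map_upt e by (simp only: add_diff_cancel_right')
qed

lemma telescope_nat: "a \<le> b \<Longrightarrow> (\<Sum>c\<in>{Suc a..b}. (f (c - 1) - f c :: int)) = f a - f b"
proof (induction b)
  case 0 then show ?case by simp
next
  case (Suc b)
  show ?case
  proof (cases "a = Suc b")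
    case True then show ?thesis by simp
  next
    case False
    then have "a \<le> b" using Suc.prems by simp
    then show ?thesis using Suc.IH by (simp add: sum.cl_ivl_Suc)
  qed
qed

lemma sum_fstR:
  assumes "i0 \<le> n + 1"
  shows "(\<Sum>c\<in>{Suc i0..n+1}. ent n (fst (Rmap n x y)) (int c))
       = (\<Sum>c\<in>{Suc i0..n+1}. ent n y (int c)) + Qf n (int i0) x y - Qf n (int n + 1) x y"
proof -
  have eqN: "int (n + 1) = int n + 1" by simp
  have "(\<Sum>c\<in>{Suc i0..n+1}. ent n (fst (Rmap n x y)) (int c))
      = (\<Sum>c\<in>{Suc i0..n+1}. ent n y (int c) + (Qf n (int (c - 1)) x y - Qf n (int c) x y))"
    by (rule sum.cong) (auto simp: ent_fstR of_nat_diff)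
  also have "\<dots> = (\<Sum>c\<in>{Suc i0..n+1}. ent n y (int c)) + (\<Sum>c\<in>{Suc i0..n+1}. (Qf n (int (c - 1)) x y - Qf n (int c) x y))"
    by (rule sum.distrib)
  also have "(\<Sum>c\<in>{Suc i0..n+1}. (Qf n (int (c - 1)) x y - Qf n (int c) x y)) = Qf n (int i0) x y - Qf n (int n + 1) x y"
    using telescope_nat[of i0 "n+1" "\<lambda>c. Qf n (int c) x y"] assms unfolding eqN by simp
  finally show ?thesis by (simp only: add_diff_eq)
qed



definition W :: "nat list list \<Rightarrow> nat" where "W ps = sum_list (map sum_list ps)"
definition valid :: "nat \<Rightarrow> nat list list \<Rightarrow> bool" where "valid n ps \<longleftrightarrow> (\<forall>p\<in>set ps. length p = n + 1)"
definition Emp :: "nat \<Rightarrow> nat list \<Rightarrow> bool" where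
  "Emp n y \<longleftrightarrow> (\<forall>i. (i - 1) mod (int n + 1) \<noteq> 0 \<longrightarrow> ent n y i = 0)"

lemma W_Cons[simp]: "W (p # ps) = sum_list p + W ps" by (simp add: W_def)
lemma valid_Cons[simp]: "valid n (p # ps) \<longleftrightarrow> length p = n + 1 \<and> valid n ps" by (simp add: valid_def)

lemma sweep_Cons': "sweep n v (p # ps) =
   (fst (Rmap n v p) # fst (sweep n (snd (Rmap n v p)) ps), v # snd (sweep n (snd (Rmap n v p)) ps))"
  by (simp add: split_beta Let_def)

declare sweep.simps(2)[simp del]
declare sweep_Cons'[simp]

lemma length_fstR[simp]: "length (fst (Rmap n x y)) = n + 1"
  by (simp add: Rmap_def del: upt_Suc)

lemma sweep_length: "length (fst (sweep n v ps)) = length ps"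
  by (induction ps arbitrary: v) (simp_all add: sweep_Cons')

lemma sweep_nth: "j < length ps \<Longrightarrow> fst (sweep n v ps) ! j = fst (Rmap n (snd (sweep n v ps) ! j) (ps ! j))"
proof (induction ps arbitrary: v j)
  case Nil then show ?case by simp
next
  case (Cons p ps)
  show ?case
  proof (cases j)
    case 0 then show ?thesis by (simp add: sweep_Cons')
  next
    case (Suc j') then show ?thesis using Cons by (simp add: sweep_Cons')
  qed
qed

lemma sweep_valid: "valid n (fst (sweep n v ps))"
  by (induction ps arbitrary: v) (simp_all add: valid_def)

lemma carrier_step:
  assumes "length y = n + 1"
  shows "ent n x 1 - int (sum_list y) \<le> ent n (snd (Rmap n x y)) 1"
proof -
  have "ent n (snd (Rmap n x y)) 1 = int (nat (ent n x 1 + Qf n 1 x y - Qf n 0 x y))"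
    using ent_sndR[of n x y 1] by simp
  moreover have "Qf n 0 x y \<le> int (sum_list y)"
  proof -
    have "Qf n 0 x y \<le> Tt n 0 x y 1" by (rule Qf_le) auto
    also have "\<dots> = (\<Sum>j\<in>{2..int n+1}. ent n y (0 + j))" by (simp add: Tt_def)
    also have "\<dots> \<le> int (sum_list y)" by (rule tail_le_sum[OF assms])
    finally show ?thesis .
  qed
  moreover have "0 \<le> Qf n 1 x y" by (rule Qf_nonneg)
  ultimately show ?thesis by linarith
qed

lemma sweep_carrier_bound:
  "valid n ps \<Longrightarrow> int (W ps) \<le> ent n v 1 \<Longrightarrow> j < length ps \<Longrightarrow>
   int (W (drop j ps)) \<le> ent n (snd (sweep n v ps) ! j) 1"
proof (induction ps arbitrary: v j)
  case Nil then show ?case by simp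
next
  case (Cons p ps)
  show ?case
  proof (cases j)
    case 0 then show ?thesis using Cons.prems by (simp add: sweep_Cons')
  next
    case (Suc j')
    have "int (W ps) \<le> ent n (snd (Rmap n v p)) 1"
      using carrier_step[of p n v] Cons.prems by simp
    then show ?thesis using Cons.IH[of "snd (Rmap n v p)" j'] Cons.prems Suc by (simp add: sweep_Cons')
  qed
qed

lemma ent_one_mod: "(i - 1) mod (int n + 1) = 0 \<Longrightarrow> ent n x i = ent n x 1"
  using ent_mod[of n x i] by simp

lemma sweep_shift:
  "valid n ps \<Longrightarrow> (\<And>i. ent n v' i = ent n v i + (if (i - 1) mod (int n + 1) = 0 then int d else 0))
   \<Longrightarrow> int (W ps) \<le> ent n v 1 \<Longrightarrow> fst (sweep n v' ps) = fst (sweep n v ps)"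
proof (induction ps arbitrary: v v')
  case Nil then show ?case by simp
next
  case (Cons p ps)
  have lp: "length p = n + 1" using Cons.prems by simp
  have Qeq: "Qf n c v' p = Qf n c v p" for c
  proof (rule Qf_shift_x)
    fix i
    show "ent n v i \<le> ent n v' i" using Cons.prems(2)[of i] by simp
    assume ne: "ent n v' i \<noteq> ent n v i"
    then have "(i - 1) mod (int n + 1) = 0" using Cons.prems(2)[of i] by (auto split: if_splits)
    then have "ent n v i = ent n v 1" by (rule ent_one_mod)
    moreover have "(\<Sum>j\<in>{2..int n+1}. ent n p (c + j)) \<le> int (sum_list p)" by (rule tail_le_sum[OF lp])
    ultimately show "(\<Sum>j\<in>{2..int n+1}. ent n p (c + j)) \<le> ent n v i" using Cons.prems(3) by simp
  qed
  have f: "fst (Rmap n v' p) = fst (Rmap n v p)" unfolding Rmap_def by (simp add: Qeq)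
  have Q0: "Qf n 0 v p \<le> int (sum_list p)"
  proof -
    have "Qf n 0 v p \<le> Tt n 0 v p 1" by (rule Qf_le) auto
    also have "\<dots> = (\<Sum>j\<in>{2..int n+1}. ent n p (0 + j))" by (simp add: Tt_def)
    also have "\<dots> \<le> int (sum_list p)" by (rule tail_le_sum[OF lp])
    finally show ?thesis .
  qed
  have nn: "0 \<le> ent n v 1 + Qf n 1 v p - Qf n 0 v p"
    using Q0 Qf_nonneg[of n 1 v p] Cons.prems(3) by simp
  have s: "ent n (snd (Rmap n v' p)) i = ent n (snd (Rmap n v p)) i + (if (i - 1) mod (int n + 1) = 0 then int d else 0)" for i
  proof -
    let ?m = "(i - 1) mod (int n + 1)"
    have mm: "?m mod (int n + 1) = ?m" by simp
    have ev: "ent n v' (?m + 1) = ent n v (?m + 1) + (if ?m = 0 then int d else 0)"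
      using Cons.prems(2)[of "?m + 1"] mm by simp
    show ?thesis
    proof (cases "?m = 0")
      case True
      then show ?thesis unfolding ent_sndR using ev nn by (simp add: Qeq)
    next
      case False
      then show ?thesis unfolding ent_sndR using ev by (simp add: Qeq)
    qed
  qed
  have b: "int (W ps) \<le> ent n (snd (Rmap n v p)) 1"
    using carrier_step[OF lp, of v] Cons.prems(3) by simp
  have "fst (sweep n (snd (Rmap n v' p)) ps) = fst (sweep n (snd (Rmap n v p)) ps)"
    by (rule Cons.IH) (use Cons.prems s b in auto)
  then show ?case by (simp add: sweep_Cons' f)
qed

lemma ent_uvec: "ent n (uvec n l) i = (if (i - 1) mod (int n + 1) = 0 then int l else 0)"
proof -
  let ?k = "nat ((i - 1) mod (int n + 1))"
  have b: "0 \<le> (i - 1) mod (int n + 1)" "(i - 1) mod (int n + 1) < int n + 1"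
    by (rule pos_mod_sign, simp) (rule pos_mod_bound, simp)
  then have k: "?k < n + 1" by (simp add: nat_less_iff)
  show ?thesis
  proof (cases "(i - 1) mod (int n + 1) = 0")
    case True then show ?thesis unfolding ent_def' uvec_def by simp
  next
    case False
    then have "0 < (i - 1) mod (int n + 1)" using b(1) by linarith
    then have "?k \<noteq> 0" by simp
    then obtain k' where "?k = Suc k'" by (cases ?k) auto
    moreover have "k' < n" using k calculation by simp
    ultimately show ?thesis using False unfolding ent_def' uvec_def by simp
  qed
qed

lemma Tl_stable: "valid n p \<Longrightarrow> W p \<le> l \<Longrightarrow> l \<le> l' \<Longrightarrow> Tl n l' p = Tl n l p"
  unfolding Tl_def
  by (rule sweep_shift[where d = "l' - l"]) (auto simp: ent_uvec)

lemma Tinf_eq: "valid n p \<Longrightarrow> W p \<le> l \<Longrightarrow> Tinf n p = Tl n l p"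
proof -
  assume v: "valid n p" and l: "W p \<le> l"
  have "\<exists>L. \<forall>l'\<ge>L. Tl n l' p = Tl n (W p) p"
    using Tl_stable[OF v] by blast
  then have ex: "\<exists>r. \<exists>L. \<forall>l'\<ge>L. Tl n l' p = r" by blast
  have "\<exists>L. \<forall>l'\<ge>L. Tl n l' p = Tinf n p"
    unfolding Tinf_def by (rule someI_ex[OF ex])
  then obtain L where L: "\<forall>l'\<ge>L. Tl n l' p = Tinf n p" by blast
  have "Tinf n p = Tl n (max L l) p" using L by simp
  also have "\<dots> = Tl n l p" using Tl_stable[OF v l, of "max L l"] by simp
  finally show ?thesis .
qed



definition balls :: "nat \<Rightarrow> nat list \<Rightarrow> int" where
  "balls n y = (\<Sum>c\<in>{2..n+1}. ent n y (int c))"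

lemma sum_nat_int: "(\<Sum>c\<in>{a..b}. f (int c)) = (\<Sum>j\<in>{int a..int b}. (f j :: int))"
proof -
  have "(\<Sum>j\<in>{int a..int b}. f j) = (\<Sum>j\<in>int ` {a..b}. f j)" by (simp add: image_int_atLeastAtMost)
  also have "\<dots> = (\<Sum>c\<in>{a..b}. f (int c))" by (subst sum.reindex) (auto simp: inj_on_def)
  finally show ?thesis by simp
qed

lemma balls_eq: "balls n y = (\<Sum>j\<in>{2..int n+1}. ent n y j)"
  unfolding balls_def sum_nat_int by (simp only: of_nat_add of_nat_1 of_nat_numeral)

lemma Emp_balls: "Emp n y \<Longrightarrow> balls n y = 0"
  unfolding balls_def
proof (rule sum.neutral, rule ballI)
  fix c assume E: "Emp n y" and c: "c \<in> {2..n+1}"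
  have "(int c - 1) mod (int n + 1) = int c - 1" by (rule mod_pos_pos_trivial) (use c in auto)
  then have "(int c - 1) mod (int n + 1) \<noteq> 0" using c by simp
  then show "ent n y (int c) = 0" using E unfolding Emp_def by blast
qed

lemma balls_Emp: "balls n y \<le> 0 \<Longrightarrow> Emp n y"
  unfolding Emp_def
proof (intro allI impI)
  fix i assume B: "balls n y \<le> 0" and m: "(i - 1) mod (int n + 1) \<noteq> 0"
  let ?m = "(i - 1) mod (int n + 1)"
  have b: "0 \<le> ?m" "?m < int n + 1"
    by (rule pos_mod_sign, simp) (rule pos_mod_bound, simp)
  define c where "c = nat ?m + 1"
  have "1 \<le> ?m" using b(1) m by linarith
  then have c: "c \<in> {2..n+1}" "int c = ?m + 1" using b unfolding c_def by auto
  have "ent n y i = ent n y (int c)" using ent_mod[of n y i] c by simp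
  also have "\<dots> \<le> balls n y" unfolding balls_def
    by (rule member_le_sum[OF c(1)]) (auto simp: ent_nonneg)
  finally show "ent n y i = 0" using B ent_nonneg[of n y i] by simp
qed

lemma Q_zero_Emp:
  assumes Ex: "Emp n x" and Ey: "Emp n y" and c: "1 \<le> c" "c \<le> int n + 1"
  shows "Qf n c x y = 0"
proof (rule antisym)
  let ?N = "int n + 1"
  have "Qf n c x y \<le> Tt n c x y (?N + 1 - c)" by (rule Qf_le) (use c in auto)
  also have "\<dots> = 0" unfolding Tt_def
  proof -
    have "(\<Sum>j\<in>{1..?N + 1 - c - 1}. ent n x (c + j)) = 0"
    proof (rule sum.neutral, rule ballI)
      fix j assume j: "j \<in> {1..?N + 1 - c - 1}"
      have "(c + j - 1) mod ?N = c + j - 1" by (rule mod_pos_pos_trivial) (use j c in auto)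
      then have "(c + j - 1) mod ?N \<noteq> 0" using j c by simp
      then show "ent n x (c + j) = 0" using Ex unfolding Emp_def by blast
    qed
    moreover have "(\<Sum>j\<in>{?N + 1 - c + 1..?N}. ent n y (c + j)) = 0"
    proof (rule sum.neutral, rule ballI)
      fix j assume j: "j \<in> {?N + 1 - c + 1..?N}"
      have "(c + j - 1) mod ?N = ((c + j - 1 - ?N) + ?N) mod ?N"
        by (rule arg_cong[where f="\<lambda>t. t mod ?N"]) simp
      also have "\<dots> = (c + j - 1 - ?N) mod ?N" by (rule mod_add_self2)
      also have "\<dots> = c + j - 1 - ?N" by (rule mod_pos_pos_trivial) (use j c in auto)
      finally have "(c + j - 1) mod ?N \<noteq> 0" using j c by simp
      then show "ent n y (c + j) = 0" using Ey unfolding Emp_def by blast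
    qed
    ultimately show "(\<Sum>j\<in>{1..?N + 1 - c - 1}. ent n x (c + j)) + (\<Sum>j\<in>{?N + 1 - c + 1..?N}. ent n y (c + j)) = 0"
      by simp
  qed
  finally show "Qf n c x y \<le> 0" .
next
  show "0 \<le> Qf n c x y" by (rule Qf_nonneg)
qed

lemma QN_Q0: "Qf n (int n + 1) x y = Qf n 0 x y"
  using Qf_period[of n 0 x y] by simp

lemma Emp_fstR:
  assumes Ex: "Emp n x" and ly: "length y = n + 1" and big: "int (sum_list y) \<le> ent n x 1"
  shows "Emp n (fst (Rmap n x y))"
proof (rule balls_Emp)
  have "balls n (fst (Rmap n x y)) = balls n y + Qf n 1 x y - Qf n (int n + 1) x y"
    unfolding balls_def using sum_fstR[of 1 n x y] by (simp only: Suc_1 of_nat_1)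
  also have "Qf n (int n + 1) x y = balls n y"
    unfolding QN_Q0 balls_eq by (rule Qf_zero[OF ly big])
  finally have eq: "balls n (fst (Rmap n x y)) = Qf n 1 x y" by simp
  have "Qf n 1 x y \<le> Tt n 1 x y (int n + 1)" by (rule Qf_le) auto
  also have "\<dots> = 0" unfolding Tt_def
  proof (simp, rule sum.neutral, rule ballI)
    fix j assume j: "j \<in> {1..int n}"
    have "(1 + j - 1) mod (int n + 1) = j" by (simp, rule mod_pos_pos_trivial) (use j in auto)
    then have "(1 + j - 1) mod (int n + 1) \<noteq> 0" using j by simp
    then show "ent n x (1 + j) = 0" using Ex unfolding Emp_def by blast
  qed
  finally show "balls n (fst (Rmap n x y)) \<le> 0" using eq by simp
qed

lemma Emp_sndR:
  assumes Ex: "Emp n x" and Ey: "Emp n y"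
  shows "Emp n (snd (Rmap n x y))"
  unfolding Emp_def
proof (intro allI impI)
  fix i assume m: "(i - 1) mod (int n + 1) \<noteq> 0"
  let ?m = "(i - 1) mod (int n + 1)"
  have b: "0 \<le> ?m" "?m < int n + 1"
    by (rule pos_mod_sign, simp) (rule pos_mod_bound, simp)
  have q1: "Qf n (?m + 1) x y = 0" by (rule Q_zero_Emp[OF Ex Ey]) (use b in auto)
  have "1 \<le> ?m" using b(1) m by linarith
  then have q2: "Qf n ?m x y = 0" by (rule Q_zero_Emp[OF Ex Ey]) (use b in auto)
  have "(?m + 1 - 1) mod (int n + 1) = ?m" by simp
  then have "ent n x (?m + 1) = 0" using Ex m unfolding Emp_def by metis
  then show "ent n (snd (Rmap n x y)) i = 0" unfolding ent_sndR q1 q2 by simp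
qed

lemma sweep_empty:
  "Emp n v \<Longrightarrow> int (W ps) \<le> ent n v 1 \<Longrightarrow> valid n ps \<Longrightarrow>
   (\<forall>j < min m (length ps). Emp n (ps ! j)) \<Longrightarrow>
   (\<forall>j < min (Suc m) (length ps). Emp n (fst (sweep n v ps) ! j))"
proof (induction ps arbitrary: v m)
  case Nil then show ?case by simp
next
  case (Cons p ps)
  have lp: "length p = n + 1" using Cons.prems by simp
  have E0: "Emp n (fst (Rmap n v p))"
    by (rule Emp_fstR[OF Cons.prems(1) lp]) (use Cons.prems(2) in simp)
  show ?case
  proof (intro allI impI)
    fix j assume j: "j < min (Suc m) (length (p # ps))"
    show "Emp n (fst (sweep n v (p # ps)) ! j)"
    proof (cases j)
      case 0 then show ?thesis using E0 by simp
    next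
      case (Suc j')
      then obtain m' where m': "m = Suc m'" using j by (cases m) auto
      have Ep: "Emp n p" using Cons.prems(4) m' by force
      have Ev: "Emp n (snd (Rmap n v p))" by (rule Emp_sndR[OF Cons.prems(1) Ep])
      have b: "int (W ps) \<le> ent n (snd (Rmap n v p)) 1"
        using carrier_step[OF lp, of v] Cons.prems(2) by simp
      have "\<forall>j<min (Suc m') (length ps). Emp n (fst (sweep n (snd (Rmap n v p)) ps) ! j)"
      proof (rule Cons.IH[OF Ev b])
        show "valid n ps" using Cons.prems by simp
        show "\<forall>j<min m' (length ps). Emp n (ps ! j)"
        proof (intro allI impI)
          fix j assume "j < min m' (length ps)"
          then have "Suc j < min m (length (p # ps))" using m' by simp
          then show "Emp n (ps ! j)" using Cons.prems(4) by fastforce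
        qed
      qed
      then show ?thesis using j Suc m' by simp
    qed
  qed
qed

lemma Emp_uvec: "Emp n (uvec n l)"
  unfolding Emp_def ent_uvec by simp

lemma iter:
  assumes "valid n q"
  shows "valid n ((Tinf n ^^ t) q) \<and> length ((Tinf n ^^ t) q) = length q \<and>
         (\<forall>j < min t (length q). Emp n (((Tinf n ^^ t) q) ! j))"
proof (induction t)
  case 0 then show ?case using assms by simp
next
  case (Suc t)
  let ?p = "(Tinf n ^^ t) q"
  have e: "(Tinf n ^^ Suc t) q = fst (sweep n (uvec n (W ?p)) ?p)"
    using Tinf_eq[of n ?p "W ?p"] Suc.IH by (simp add: Tl_def)
  have "\<forall>j<min (Suc t) (length ?p). Emp n (fst (sweep n (uvec n (W ?p)) ?p) ! j)"
    by (rule sweep_empty) (use Suc.IH in \<open>auto simp: Emp_uvec ent_uvec\<close>)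
  then show ?case unfolding e using Suc.IH by (simp add: sweep_valid sweep_length)
qed



theorem lemma4p5:
  fixes n l i :: nat and q :: "nat list list" and lam :: "nat list"
  assumes "n \<ge> 1"
    and "length lam = length q"
    and "\<forall>j < length q. lam ! j \<ge> 1 \<and> inB n (lam ! j) (q ! j)"
    and "1 \<le> i" and "i \<le> n + 1"
    and "l \<ge> sum_list lam"
    and "Tl n l q = Tinf n q"
  shows "rhoS n i q - rhoS n i (Tinf n q)
         = (\<Sum>j\<in>{1..length q}. Qf n (int i) (carriers n l q ! (j - 1)) (q ! (j - 1)))"
proof -
  let ?k = "length q"
  let ?T = "Tinf n"
  have vq: "valid n q" unfolding valid_def
  proof
    fix p assume "p \<in> set q"
    then obtain j where "j < ?k" "p = q ! j" by (auto simp: in_set_conv_nth)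
    then show "length p = n + 1" using assms(3) by (auto simp: inB_def)
  qed
  have "lam = map sum_list q"
    by (rule nth_equalityI) (use assms(2,3) in \<open>auto simp: inB_def\<close>)
  then have hl: "W q \<le> l" using assms(6) by (simp add: W_def)
  have Tq: "?T q = fst (sweep n (uvec n l) q)" using assms(7) by (simp add: Tl_def)
  have lenT: "length (?T q) = ?k" using Tq by (simp add: sweep_length)
  define g where "g t = (\<Sum>j\<in>{1..?k}. \<Sum>c\<in>{2..n+1}. ent n (((?T ^^ t) q) ! (j - 1)) (int c))" for t
  have gz: "g t = 0" if "?k \<le> t" for t
  proof -
    have it: "\<forall>j < min t ?k. Emp n (((?T ^^ t) q) ! j)" using iter[OF vq, of t] by blast
    show ?thesis unfolding g_def
    proof (rule sum.neutral, rule ballI)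
      fix j assume j: "j \<in> {1..?k}"
      then have "Emp n (((?T ^^ t) q) ! (j - 1))" using it that by auto
      then show "(\<Sum>c\<in>{2..n+1}. ent n (((?T ^^ t) q) ! (j - 1)) (int c)) = 0"
        using Emp_balls unfolding balls_def by blast
    qed
  qed
  define A where "A p = (\<Sum>j\<in>{1..?k}. \<Sum>c\<in>{2..i}. ent n (p ! (j - 1)) (int c))" for p
  have r1: "rhoS n i q = A q + (\<Sum>t\<in>{t. t \<ge> 1 \<and> g t \<noteq> 0}. g t)"
    unfolding rhoS_def rho_def Let_def A_def g_def by simp
  have r2: "rhoS n i (?T q) = A (?T q) + (\<Sum>t\<in>{t. t \<ge> 1 \<and> g (Suc t) \<noteq> 0}. g (Suc t))"
  proof -
    have fp: "(?T ^^ t) (?T q) = (?T ^^ Suc t) q" for t by (simp only: funpow_Suc_right o_apply)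
    show ?thesis unfolding rhoS_def rho_def Let_def A_def g_def lenT fp by simp
  qed
  have s1: "(\<Sum>t\<in>{t. t \<ge> 1 \<and> g t \<noteq> 0}. g t) = (\<Sum>t\<in>{1..?k}. g t)"
  proof (rule sum.mono_neutral_left)
    show "{t. t \<ge> 1 \<and> g t \<noteq> 0} \<subseteq> {1..?k}"
    proof
      fix t assume "t \<in> {t. t \<ge> 1 \<and> g t \<noteq> 0}"
      then have "1 \<le> t" "g t \<noteq> 0" by auto
      moreover have "t \<le> ?k" using gz[of t] calculation(2) by linarith
      ultimately show "t \<in> {1..?k}" by simp
    qed
  qed auto
  have s2: "(\<Sum>t\<in>{t. t \<ge> 1 \<and> g (Suc t) \<noteq> 0}. g (Suc t)) = (\<Sum>t\<in>{1..?k}. g (Suc t))"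
  proof (rule sum.mono_neutral_left)
    show "{t. t \<ge> 1 \<and> g (Suc t) \<noteq> 0} \<subseteq> {1..?k}"
    proof
      fix t assume "t \<in> {t. t \<ge> 1 \<and> g (Suc t) \<noteq> 0}"
      then have "1 \<le> t" "g (Suc t) \<noteq> 0" by auto
      moreover have "t \<le> ?k" using gz[of "Suc t"] calculation(2) by linarith
      ultimately show "t \<in> {1..?k}" by simp
    qed
  qed auto
  have tel: "(\<Sum>t\<in>{1..?k}. g t) - (\<Sum>t\<in>{1..?k}. g (Suc t)) = g 1"
    using sum_Suc_diff[of 1 ?k g] gz[of "Suc ?k"] by (simp add: sum_subtractf)
  have g1: "g 1 = (\<Sum>j\<in>{1..?k}. \<Sum>c\<in>{2..n+1}. ent n (?T q ! (j - 1)) (int c))"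
    unfolding g_def by simp
  have "rhoS n i q - rhoS n i (?T q) = A q - A (?T q) + g 1"
    using r1 r2 s1 s2 tel by simp
  also have "\<dots> = (\<Sum>j\<in>{1..?k}. (\<Sum>c\<in>{2..i}. ent n (q ! (j - 1)) (int c))
                   - (\<Sum>c\<in>{2..i}. ent n (?T q ! (j - 1)) (int c))
                   + (\<Sum>c\<in>{2..n+1}. ent n (?T q ! (j - 1)) (int c)))"
    unfolding A_def g1 by (simp add: sum.distrib sum_subtractf)
  also have "\<dots> = (\<Sum>j\<in>{1..?k}. Qf n (int i) (carriers n l q ! (j - 1)) (q ! (j - 1)))"
  proof (rule sum.cong[OF refl])
    fix j assume j: "j \<in> {1..?k}"
    let ?y = "q ! (j - 1)"
    let ?x = "carriers n l q ! (j - 1)"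
    have jl: "j - 1 < ?k" using j by auto
    have yt: "?T q ! (j - 1) = fst (Rmap n ?x ?y)"
      unfolding Tq carriers_def using sweep_nth[OF jl] by simp
    have ly: "length ?y = n + 1" using vq jl by (simp add: valid_def)
    have "int (W (drop (j - 1) q)) \<le> ent n ?x 1"
      unfolding carriers_def
      by (rule sweep_carrier_bound[OF vq _ jl]) (use hl in \<open>simp add: ent_uvec\<close>)
    moreover have "drop (j - 1) q = ?y # drop (Suc (j - 1)) q" using Cons_nth_drop_Suc[OF jl] by simp
    then have "W (drop (j - 1) q) = sum_list ?y + W (drop (Suc (j - 1)) q)" by simp
    ultimately have big: "int (sum_list ?y) \<le> ent n ?x 1" by simp
    have split: "{2..n+1} = {2..i} \<union> {Suc i..n+1}" using assms(4,5) by auto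
    have sp: "(\<Sum>c\<in>{2..n+1}. f c) = (\<Sum>c\<in>{2..i}. f c) + (\<Sum>c\<in>{Suc i..n+1}. f c)" for f :: "nat \<Rightarrow> int"
      unfolding split by (rule sum.union_disjoint) auto
    have QN: "Qf n (int n + 1) ?x ?y = (\<Sum>c\<in>{2..n+1}. ent n ?y (int c))"
      unfolding QN_Q0 Qf_zero[OF ly big] balls_eq[symmetric] balls_def ..
    have "(\<Sum>c\<in>{Suc i..n+1}. ent n (fst (Rmap n ?x ?y)) (int c))
       = (\<Sum>c\<in>{Suc i..n+1}. ent n ?y (int c)) + Qf n (int i) ?x ?y - Qf n (int n + 1) ?x ?y"
      by (rule sum_fstR) (rule assms(5))
    then show "(\<Sum>c\<in>{2..i}. ent n (q ! (j - 1)) (int c))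
                   - (\<Sum>c\<in>{2..i}. ent n (?T q ! (j - 1)) (int c))
                   + (\<Sum>c\<in>{2..n+1}. ent n (?T q ! (j - 1)) (int c))
          = Qf n (int i) ?x ?y"
      unfolding yt sp[of "\<lambda>c. ent n (fst (Rmap n ?x ?y)) (int c)"] QN sp[of "\<lambda>c. ent n ?y (int c)"]
      by simp
  qed
  finally show ?thesis .
qed

end
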